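(* Let $M$ be a finite monoid with identity $1$. (i) If $M$ is a group, then $\sigma_m(M)=\sigma_m^*(M)=\sigma_s(M)=\sigma_g(M)$. (ii) If $S=M-\{1\}$ is a subsemigroup of $M$ which is a group, then $\sigma_m^*(M)=\sigma_s(M)=2$ and $\sigma_m(M)=\sigma_g(S)$. (iii) If $S=M-\{1\}$ is a subsemigroup of $M$ which is monogenic but not a group, then $\sigma_s(M)=2$ and $\sigma_m^*(M)=\sigma_m(M)=\infty$. (iv) Otherwise, $\sigma_m(M)=\sigma_m^*(M)=\sigma_s(M)=2$.
   Context: A subsemigroup is a nonempty subset closed under the operation; monogenic means generated as a semigroup by a single element. For a monoid $M$: a submonoid is a subsemigroup containing the identity of $M$; a monoidal subsemigroup is a subsemigroup that is a monoid in its own right (identity possibly different from that of $M$). $\sigma_s$, $\sigma_m$, $\sigma_m^*$, $\sigma_g$ denote the least positive integer $n$ such that the structure is the union of $n$ proper subsemigroups, proper submonoids, proper monoidal subsemigroups, respectively proper subgroups (for a group), or $\infty$ if no such finite $n$ exists. *)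

theory Defs
  imports "HOL-Algebra.Group" "HOL-Library.Extended_Nat"
begin

definition subsemigroup :: "('a, 'b) monoid_scheme \<Rightarrow> 'a set \<Rightarrow> bool" where
  "subsemigroup M T \<longleftrightarrow> T \<subseteq> carrier M \<and> T \<noteq> {} \<and>
     (\<forall>x\<in>T. \<forall>y\<in>T. x \<otimes>\<^bsub>M\<^esub> y \<in> T)"

definition submonoid' :: "('a, 'b) monoid_scheme \<Rightarrow> 'a set \<Rightarrow> bool" where
  "submonoid' M T \<longleftrightarrow> subsemigroup M T \<and> \<one>\<^bsub>M\<^esub> \<in> T"

definition monoidal_subsemigroup :: "('a, 'b) monoid_scheme \<Rightarrow> 'a set \<Rightarrow> bool" where
  "monoidal_subsemigroup M T \<longleftrightarrow> subsemigroup M T \<and>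
     (\<exists>e\<in>T. \<forall>x\<in>T. e \<otimes>\<^bsub>M\<^esub> x = x \<and> x \<otimes>\<^bsub>M\<^esub> e = x)"

definition monogenic :: "('a, 'b) monoid_scheme \<Rightarrow> 'a set \<Rightarrow> bool" where
  "monogenic M T \<longleftrightarrow> (\<exists>a\<in>T. T = {a [^]\<^bsub>M\<^esub> (n::nat) | n. n \<ge> 1})"

text \<open>Least n such that X is the union of n proper subsets satisfying P; \<infinity> if none.\<close>
definition cover_num :: "'a set \<Rightarrow> ('a set \<Rightarrow> bool) \<Rightarrow> enat" where
  "cover_num X P = Inf {enat n | n. \<exists>F. finite F \<and> card F = n \<and>
      (\<forall>A\<in>F. P A \<and> A \<noteq> X) \<and> \<Union>F = X}"

definition sigma_s :: "('a, 'b) monoid_scheme \<Rightarrow> enat" where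
  "sigma_s M = cover_num (carrier M) (subsemigroup M)"

definition sigma_m :: "('a, 'b) monoid_scheme \<Rightarrow> enat" where
  "sigma_m M = cover_num (carrier M) (submonoid' M)"

definition sigma_m_star :: "('a, 'b) monoid_scheme \<Rightarrow> enat" where
  "sigma_m_star M = cover_num (carrier M) (monoidal_subsemigroup M)"

definition sigma_g :: "('a, 'b) monoid_scheme \<Rightarrow> enat" where
  "sigma_g G = cover_num (carrier G) (\<lambda>H. subgroup H G)"

end

theory Submission
  imports Defs
begin


lemma cover_num_two:
  assumes "X \<noteq> {}" "P A" "P B" "A \<noteq> X" "B \<noteq> X" "A \<union> B = X"
  shows "cover_num X P = 2"
proof -
  let ?N = "{enat n | n. \<exists>F. finite F \<and> card F = n \<and> (\<forall>A\<in>F. P A \<and> A \<noteq> X) \<and> \<Union>F = X}"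
  have AB: "A \<noteq> B" using assms by auto
  have in2: "enat 2 \<in> ?N"
    apply (rule CollectI, rule exI[of _ 2], simp)
    apply (rule exI[of _ "{A,B}"]) using assms AB by auto
  have low: "enat 2 \<le> m" if "m \<in> ?N" for m
  proof -
    from that obtain F where F: "finite F" "m = enat (card F)" "\<forall>A\<in>F. P A \<and> A \<noteq> X" "\<Union>F = X" by blast
    have "F \<noteq> {}" using F(4) assms(1) by auto
    hence "card F \<noteq> 0" using F(1) by simp
    moreover have "card F \<noteq> 1"
    proof
      assume "card F = 1" then obtain C where "F = {C}" by (rule card_1_singletonE)
      with F(3,4) show False by simp
    qed
    ultimately have "2 \<le> card F" by (cases "card F") auto
    thus "enat 2 \<le> m" using F(2) by simp
  qed
  have "Inf ?N \<le> enat 2" using in2 by (rule Inf_lower)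
  moreover have "enat 2 \<le> Inf ?N" using low by (rule Inf_greatest)
  ultimately have "Inf ?N = enat 2" by (rule antisym)
  thus ?thesis unfolding cover_num_def by (simp add: numeral_eq_enat)
qed

lemma cover_num_inf:
  assumes "a \<in> X" "\<And>A. P A \<Longrightarrow> A \<noteq> X \<Longrightarrow> a \<notin> A"
  shows "cover_num X P = \<infinity>"
proof -
  have e: "{enat n | n. \<exists>F. finite F \<and> card F = n \<and> (\<forall>A\<in>F. P A \<and> A \<noteq> X) \<and> \<Union>F = X} = {}"
  proof (rule equals0I)
    fix m assume "m \<in> {enat n | n. \<exists>F. finite F \<and> card F = n \<and> (\<forall>A\<in>F. P A \<and> A \<noteq> X) \<and> \<Union>F = X}"
    then obtain F where F: "\<forall>A\<in>F. P A \<and> A \<noteq> X" "\<Union>F = X" by blast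
    then obtain A where "A \<in> F" "a \<in> A" using assms(1) by blast
    with F assms(2) show False by blast
  qed
  show ?thesis unfolding cover_num_def e by (simp add: top_enat_def)
qed

lemma finite_group_closed_subgroup:
  fixes G (structure)
  assumes "group G" "finite (carrier G)" "T \<subseteq> carrier G" "T \<noteq> {}"
    "\<forall>x\<in>T. \<forall>y\<in>T. x \<otimes>\<^bsub>G\<^esub> y \<in> T"
  shows "subgroup T G"
proof -
  interpret group G by fact
  have key: "\<exists>z\<in>T. x \<otimes> z = y" if "x \<in> T" "y \<in> T" for x y
  proof -
    have "(\<lambda>z. x \<otimes> z) ` T = T"
    proof (rule endo_inj_surj)
      show "finite T" using finite_subset[OF assms(3) assms(2)] .
      show "(\<lambda>z. x \<otimes> z) ` T \<subseteq> T" using assms(5) that by auto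
      show "inj_on (\<lambda>z. x \<otimes> z) T"
        by (rule inj_onI) (use that assms(3) in \<open>metis Units_eq Units_l_cancel subsetD\<close>)
    qed
    with that show ?thesis by force
  qed
  have one: "\<one> \<in> T"
  proof -
    obtain x where x: "x \<in> T" using assms by auto
    then obtain z where "z \<in> T" "x \<otimes> z = x" using key by blast
    moreover have "x \<in> carrier G" "z \<in> carrier G" using x \<open>z \<in> T\<close> assms(3) by auto
    ultimately have "z = \<one>" by simp
    thus ?thesis using \<open>z \<in> T\<close> by simp
  qed
  show ?thesis
  proof (rule subgroupI)
    fix a assume a: "a \<in> T"
    then obtain z where z: "z \<in> T" "a \<otimes> z = \<one>" using key one by blast
    moreover have "a \<in> carrier G" "z \<in> carrier G" using a z assms(3) by auto
    have "z \<otimes> a = \<one>" using inv_comm[OF z(2) \<open>a \<in> carrier G\<close> \<open>z \<in> carrier G\<close>] .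
    hence "inv a = z" using \<open>a \<in> carrier G\<close> \<open>z \<in> carrier G\<close> by (rule inv_equality)
    thus "inv a \<in> T" using z by simp
  next
    show "T \<subseteq> carrier G" "T \<noteq> {}" by (fact assms)+
  next
    fix a b assume "a \<in> T" "b \<in> T" thus "a \<otimes> b \<in> T" using assms(5) by blast
  qed
qed

lemma make_group:
  assumes "monoid M" "S \<subseteq> carrier M" "\<forall>x\<in>S. \<forall>y\<in>S. x \<otimes>\<^bsub>M\<^esub> y \<in> S" "e \<in> S"
    "\<forall>x\<in>S. e \<otimes>\<^bsub>M\<^esub> x = x" "\<forall>x\<in>S. \<exists>y\<in>S. y \<otimes>\<^bsub>M\<^esub> x = e"
  shows "group (M\<lparr>carrier := S, one := e\<rparr>)"
  apply (rule groupI) using assms by (auto simp: monoid.m_assoc subset_iff)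

lemma cover_num_le:
  assumes "\<And>F. finite F \<Longrightarrow> \<forall>A\<in>F. P A \<and> A \<noteq> X \<Longrightarrow> \<Union>F = X \<Longrightarrow>
     \<exists>F'. finite F' \<and> card F' \<le> card F \<and> (\<forall>A\<in>F'. Q A \<and> A \<noteq> Y) \<and> \<Union>F' = Y"
  shows "cover_num Y Q \<le> cover_num X P"
  unfolding cover_num_def
proof (rule Inf_mono)
  fix b assume "b \<in> {enat n | n. \<exists>F. finite F \<and> card F = n \<and> (\<forall>A\<in>F. P A \<and> A \<noteq> X) \<and> \<Union>F = X}"
  then obtain F where F: "finite F" "b = enat (card F)" "\<forall>A\<in>F. P A \<and> A \<noteq> X" "\<Union>F = X" by blast
  from assms[OF F(1,3,4)] obtain F' where F': "finite F'" "card F' \<le> card F" "\<forall>A\<in>F'. Q A \<and> A \<noteq> Y" "\<Union>F' = Y"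
    by blast
  hence "enat (card F') \<in> {enat n | n. \<exists>F. finite F \<and> card F = n \<and> (\<forall>A\<in>F. Q A \<and> A \<noteq> Y) \<and> \<Union>F = Y}"
    by blast
  moreover have "enat (card F') \<le> b" using F(2) F'(2) by simp
  ultimately show "\<exists>a\<in>{enat n | n. \<exists>F. finite F \<and> card F = n \<and> (\<forall>A\<in>F. Q A \<and> A \<noteq> Y) \<and> \<Union>F = Y}. a \<le> b"
    by blast
qed


lemma right_case:
  fixes f :: "'a \<Rightarrow> 'a \<Rightarrow> 'a"
  assumes fin: "finite S"
    and cl: "\<forall>x\<in>S. \<forall>y\<in>S. f x y \<in> S"
    and as: "\<forall>x\<in>S. \<forall>y\<in>S. \<forall>z\<in>S. f (f x y) z = f x (f y z)"
    and sq: "\<forall>y\<in>S. \<exists>u\<in>S. \<exists>v\<in>S. y = f u v"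
    and ex: "\<exists>R. R \<subseteq> S \<and> R \<noteq> {} \<and> R \<noteq> S \<and> (\<forall>r\<in>R. \<forall>s\<in>S. f r s \<in> R)"
  shows "\<exists>A B. A \<subseteq> S \<and> B \<subseteq> S \<and> A \<noteq> {} \<and> B \<noteq> {} \<and> A \<noteq> S \<and> B \<noteq> S \<and> A \<union> B = S
           \<and> (\<forall>x\<in>A. \<forall>y\<in>A. f x y \<in> A) \<and> (\<forall>x\<in>B. \<forall>y\<in>B. f x y \<in> B)"
proof -
  define RI where "RI = {R. R \<subseteq> S \<and> R \<noteq> {} \<and> R \<noteq> S \<and> (\<forall>r\<in>R. \<forall>s\<in>S. f r s \<in> R)}"
  have finRI: "finite RI" unfolding RI_def using fin by (auto intro: finite_subset[of _ "Pow S"])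
  have neRI: "RI \<noteq> {}" using ex unfolding RI_def by blast
  have "Max (card ` RI) \<in> card ` RI" using finRI neRI by (intro Max_in) auto
  then obtain R1 where R1: "R1 \<in> RI" "card R1 = Max (card ` RI)" by (metis imageE)
  have R1max: "card R \<le> card R1" if "R \<in> RI" for R
    using R1(2) finRI that by simp
  have R1p: "R1 \<subseteq> S" "R1 \<noteq> {}" "R1 \<noteq> S" "\<forall>r\<in>R1. \<forall>s\<in>S. f r s \<in> R1"
    using R1(1) unfolding RI_def by auto
  have ri_closed: "\<forall>x\<in>R. \<forall>y\<in>R. f x y \<in> R" if "R \<in> RI" for R
    using that unfolding RI_def by blast
  show ?thesis
  proof (cases "\<exists>R2\<in>RI. R1 \<union> R2 = S")
    case True
    then obtain R2 where R2: "R2 \<in> RI" "R1 \<union> R2 = S" by blast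
    show ?thesis
      apply (rule exI[of _ R1], rule exI[of _ R2])
      using R1(1) R2 ri_closed unfolding RI_def by blast
  next
    case False
    have sub: "R \<subseteq> R1" if "R \<in> RI" for R
    proof -
      have "R1 \<union> R \<in> RI" using that R1(1) False unfolding RI_def by blast
      hence c: "card (R1 \<union> R) \<le> card R1" by (rule R1max)
      have "R1 \<union> R \<subseteq> S" using that R1p(1) unfolding RI_def by blast
      hence "finite (R1 \<union> R)" using fin by (rule finite_subset)
      hence "R1 = R1 \<union> R" using Un_upper1 c by (rule card_seteq)
      thus ?thesis by blast
    qed
    define V where "V = S - R1"
    have surj: "\<exists>s\<in>S. f y s = w" if y: "y \<in> V" and w: "w \<in> S" for y w
    proof -
      have yS: "y \<in> S" "y \<notin> R1" using y unfolding V_def by auto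
      have "f y ` S = S"
      proof (rule ccontr)
        assume ne: "f y ` S \<noteq> S"
        have ri: "\<forall>r\<in>f y ` S. \<forall>s\<in>S. f r s \<in> f y ` S"
        proof (intro ballI)
          fix r s assume r: "r \<in> f y ` S" and s: "s \<in> S"
          then obtain t where t: "t \<in> S" "r = f y t" by auto
          have "f r s = f y (f t s)" using as yS(1) t s by simp
          thus "f r s \<in> f y ` S" using cl t(1) s by auto
        qed
        have "f y ` S \<subseteq> S" using cl yS by auto
        hence "f y ` S \<in> RI" unfolding RI_def using ne yS ri by auto
        hence Y: "f y ` S \<subseteq> R1" by (rule sub)
        have "insert y (f y ` S) = S"
        proof (rule ccontr)
          assume "insert y (f y ` S) \<noteq> S"
          moreover have "insert y (f y ` S) \<subseteq> S" using cl yS by auto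
          moreover have "\<forall>r\<in>insert y (f y ` S). \<forall>s\<in>S. f r s \<in> insert y (f y ` S)"
            using ri by blast
          ultimately have "insert y (f y ` S) \<in> RI" unfolding RI_def by blast
          hence "insert y (f y ` S) \<subseteq> R1" by (rule sub)
          thus False using yS by blast
        qed
        obtain u v where uv: "u \<in> S" "v \<in> S" "y = f u v" using sq yS by blast
        have "u \<notin> R1" using uv R1p(4) yS by auto
        hence "u = y" using uv(1) Y \<open>insert y (f y ` S) = S\<close> by blast
        hence "y \<in> f y ` S" using uv by blast
        thus False using Y yS by blast
      qed
      hence "w \<in> f y ` S" using w by simp
      thus ?thesis by (metis imageE)
    qed
    have Vcl: "\<forall>x\<in>V. \<forall>y\<in>V. f x y \<in> V"
    proof (intro ballI)
      fix y z assume y: "y \<in> V" and z: "z \<in> V"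
      have yzS: "y \<in> S" "z \<in> S" using y z unfolding V_def by auto
      show "f y z \<in> V"
      proof (rule ccontr)
        assume "f y z \<notin> V"
        hence in1: "f y z \<in> R1" using cl yzS unfolding V_def by auto
        have "S \<subseteq> R1"
        proof
          fix w assume w: "w \<in> S"
          obtain s' where s': "s' \<in> S" "f y s' = w" using surj[OF y w] by blast
          obtain s'' where s'': "s'' \<in> S" "f z s'' = s'" using surj[OF z s'(1)] by blast
          have "w = f (f y z) s''" using s' s'' as yzS by auto
          thus "w \<in> R1" using in1 s''(1) R1p(4) by auto
        qed
        thus False using R1p by blast
      qed
    qed
    show ?thesis
      apply (rule exI[of _ R1], rule exI[of _ V])
      using R1p Vcl ri_closed[OF R1(1)] unfolding V_def by blast
  qed
qed

lemma rideal_image: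
  fixes f :: "'a \<Rightarrow> 'a \<Rightarrow> 'a"
  assumes cl: "\<forall>x\<in>S. \<forall>y\<in>S. f x y \<in> S"
    and as: "\<forall>x\<in>S. \<forall>y\<in>S. \<forall>z\<in>S. f (f x y) z = f x (f y z)"
    and y: "y \<in> S"
  shows "\<forall>r\<in>f y ` S. \<forall>s\<in>S. f r s \<in> f y ` S"
proof (intro ballI)
  fix r s assume r: "r \<in> f y ` S" and s: "s \<in> S"
  then obtain t where t: "t \<in> S" "r = f y t" by auto
  have "f r s = f y (f t s)" using as y t s by simp
  thus "f r s \<in> f y ` S" using cl t(1) s by auto
qed

lemma simple_group:
  fixes f :: "'a \<Rightarrow> 'a \<Rightarrow> 'a"
  assumes as: "\<forall>x\<in>S. \<forall>y\<in>S. \<forall>z\<in>S. f (f x y) z = f x (f y z)"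
    and ne: "S \<noteq> {}" and rs: "\<forall>x\<in>S. f x ` S = S" and ls: "\<forall>x\<in>S. (\<lambda>s. f s x) ` S = S"
  shows "\<exists>e\<in>S. (\<forall>x\<in>S. f e x = x \<and> f x e = x) \<and> (\<forall>x\<in>S. \<exists>y\<in>S. f y x = e)"
proof -
  obtain a where a: "a \<in> S" using ne by blast
  have "a \<in> (\<lambda>s. f s a) ` S" using ls a by simp
  then obtain e where e: "e \<in> S" "f e a = a" by auto
  have "a \<in> f a ` S" using rs a by simp
  then obtain e' where e': "e' \<in> S" "f a e' = a" by auto
  have le: "f e x = x" if x: "x \<in> S" for x
  proof -
    have "x \<in> f a ` S" using rs a x by simp
    then obtain t where t: "t \<in> S" "x = f a t" by auto
    have "f e (f a t) = f (f e a) t" using as e(1) a t(1) by simp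
    thus ?thesis using e(2) t(2) by simp
  qed
  have re: "f x e' = x" if x: "x \<in> S" for x
  proof -
    have "x \<in> (\<lambda>s. f s a) ` S" using ls a x by simp
    then obtain t where t: "t \<in> S" "x = f t a" by auto
    have "f (f t a) e' = f t (f a e')" using as e'(1) a t(1) by simp
    thus ?thesis using e'(2) t(2) by simp
  qed
  have "e = e'" using le[OF e'(1)] re[OF e(1)] by simp
  have inv: "\<exists>y\<in>S. f y x = e" if x: "x \<in> S" for x
  proof -
    have "e \<in> (\<lambda>s. f s x) ` S" using ls x e(1) by simp
    thus ?thesis by auto
  qed
  show ?thesis using e(1) le re inv \<open>e = e'\<close> by blast
qed

lemma semigroup_cover:
  fixes f :: "'a \<Rightarrow> 'a \<Rightarrow> 'a"
  assumes fin: "finite S" and ne: "S \<noteq> {}"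
    and cl: "\<forall>x\<in>S. \<forall>y\<in>S. f x y \<in> S"
    and as: "\<forall>x\<in>S. \<forall>y\<in>S. \<forall>z\<in>S. f (f x y) z = f x (f y z)"
    and nm: "\<forall>a\<in>S. \<exists>T. T \<subseteq> S \<and> a \<in> T \<and> T \<noteq> S \<and> (\<forall>x\<in>T. \<forall>y\<in>T. f x y \<in> T)"
    and ng: "\<not> (\<exists>e\<in>S. (\<forall>x\<in>S. f e x = x \<and> f x e = x) \<and> (\<forall>x\<in>S. \<exists>y\<in>S. f y x = e))"
  shows "\<exists>A B. A \<subseteq> S \<and> B \<subseteq> S \<and> A \<noteq> {} \<and> B \<noteq> {} \<and> A \<noteq> S \<and> B \<noteq> S \<and> A \<union> B = S
           \<and> (\<forall>x\<in>A. \<forall>y\<in>A. f x y \<in> A) \<and> (\<forall>x\<in>B. \<forall>y\<in>B. f x y \<in> B)"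
proof (cases "\<exists>a\<in>S. \<forall>u\<in>S. \<forall>v\<in>S. f u v \<noteq> a")
  case True
  then obtain a where a: "a \<in> S" "\<forall>u\<in>S. \<forall>v\<in>S. f u v \<noteq> a" by blast
  from bspec[OF nm a(1)] obtain T where T: "T \<subseteq> S" "a \<in> T" "T \<noteq> S" "\<forall>x\<in>T. \<forall>y\<in>T. f x y \<in> T"
    by (elim exE conjE)
  have "f a a \<in> S" using cl a(1) by blast
  moreover have "f a a \<noteq> a" using a by blast
  ultimately have faa: "S - {a} \<noteq> {}" by blast
  have c1: "\<forall>x\<in>S - {a}. \<forall>y\<in>S - {a}. f x y \<in> S - {a}"
  proof (intro ballI)
    fix x y assume "x \<in> S - {a}" "y \<in> S - {a}"
    hence "x \<in> S" "y \<in> S" by auto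
    thus "f x y \<in> S - {a}" using cl a(2) by blast
  qed
  have u: "(S - {a}) \<union> T = S" using T(1,2) a(1) by blast
  have "S - {a} \<noteq> S" using a(1) by blast
  moreover have "S - {a} \<subseteq> S" by blast
  moreover have "T \<noteq> {}" using T(2) by blast
  ultimately show ?thesis using faa c1 u T(1,3,4) by blast
next
  case False
  hence sq: "\<forall>y\<in>S. \<exists>u\<in>S. \<exists>v\<in>S. y = f u v" by (metis (mono_tags))
  show ?thesis
  proof (cases "\<exists>R. R \<subseteq> S \<and> R \<noteq> {} \<and> R \<noteq> S \<and> (\<forall>r\<in>R. \<forall>s\<in>S. f r s \<in> R)")
    case True thus ?thesis using right_case[OF fin cl as sq] by blast
  next
    case nR: False
    let ?g = "\<lambda>x y. f y x"
    have cl': "\<forall>x\<in>S. \<forall>y\<in>S. ?g x y \<in> S" using cl by auto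
    have as': "\<forall>x\<in>S. \<forall>y\<in>S. \<forall>z\<in>S. ?g (?g x y) z = ?g x (?g y z)" using as by simp
    have sq': "\<forall>y\<in>S. \<exists>u\<in>S. \<exists>v\<in>S. y = ?g u v" using sq by blast
    show ?thesis
    proof (cases "\<exists>R. R \<subseteq> S \<and> R \<noteq> {} \<and> R \<noteq> S \<and> (\<forall>r\<in>R. \<forall>s\<in>S. ?g r s \<in> R)")
      case True
      from right_case[OF fin cl' as' sq' True] obtain A B where
        AB: "A \<subseteq> S \<and> B \<subseteq> S \<and> A \<noteq> {} \<and> B \<noteq> {} \<and> A \<noteq> S \<and> B \<noteq> S \<and> A \<union> B = S
           \<and> (\<forall>x\<in>A. \<forall>y\<in>A. ?g x y \<in> A) \<and> (\<forall>x\<in>B. \<forall>y\<in>B. ?g x y \<in> B)" by blast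
      show ?thesis apply (rule exI[of _ A], rule exI[of _ B]) using AB by blast
    next
      case nL: False
      have rs: "\<forall>x\<in>S. f x ` S = S"
      proof
        fix x assume x: "x \<in> S"
        have "f x ` S \<subseteq> S" using cl x by auto
        moreover have "f x ` S \<noteq> {}" using ne by auto
        moreover note rideal_image[OF cl as x]
        ultimately show "f x ` S = S" using nR by blast
      qed
      have ls: "\<forall>x\<in>S. ?g x ` S = S"
      proof
        fix x assume x: "x \<in> S"
        have "?g x ` S \<subseteq> S" using cl x by auto
        moreover have "?g x ` S \<noteq> {}" using ne by auto
        moreover note rideal_image[OF cl' as' x]
        ultimately show "?g x ` S = S" using nL by blast
      qed
      from simple_group[OF as ne rs] ls ng show ?thesis by simp
    qed
  qed
qed



lemma pow_one1: "monoid M \<Longrightarrow> a \<in> carrier M \<Longrightarrow> a [^]\<^bsub>M\<^esub> (1::nat) = a"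
  by (simp add: monoid.nat_pow_Suc monoid.nat_pow_0 monoid.l_one)

lemma powers_in:
  assumes M: "monoid M" and T: "T \<subseteq> carrier M" "\<forall>x\<in>T. \<forall>y\<in>T. x \<otimes>\<^bsub>M\<^esub> y \<in> T" "a \<in> T"
  shows "n \<ge> 1 \<Longrightarrow> a [^]\<^bsub>M\<^esub> (n::nat) \<in> T"
proof (induction n)
  case 0 thus ?case by simp
next
  case (Suc n)
  have a: "a \<in> carrier M" using T by blast
  show ?case
  proof (cases "n = 0")
    case True thus ?thesis using pow_one1[OF M a] T(3) by simp
  next
    case False
    hence "a [^]\<^bsub>M\<^esub> n \<in> T" using Suc by simp
    thus ?thesis using T(2,3) monoid.nat_pow_Suc[OF M, of a n] by simp
  qed
qed

lemma finite_monoid_inv: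
  fixes M (structure)
  assumes M: "monoid M" and fin: "finite (carrier M)" and a: "a \<in> carrier M" and r: "r \<in> carrier M"
    and ar: "a \<otimes>\<^bsub>M\<^esub> r = \<one>\<^bsub>M\<^esub>"
  shows "r \<otimes>\<^bsub>M\<^esub> a = \<one>\<^bsub>M\<^esub>"
proof -
  interpret monoid M by fact
  have "(\<lambda>z. r \<otimes> z) ` carrier M = carrier M"
  proof (rule endo_inj_surj[OF fin])
    show "(\<lambda>z. r \<otimes> z) ` carrier M \<subseteq> carrier M" using r by auto
    show "inj_on (\<lambda>z. r \<otimes> z) (carrier M)"
    proof (rule inj_onI)
      fix x y assume x: "x \<in> carrier M" and y: "y \<in> carrier M" and e: "r \<otimes> x = r \<otimes> y"
      have "(a \<otimes> r) \<otimes> x = (a \<otimes> r) \<otimes> y" using e a r x y by (simp add: m_assoc)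
      thus "x = y" using ar x y by simp
    qed
  qed
  hence "\<one> \<in> (\<lambda>z. r \<otimes> z) ` carrier M" by simp
  then obtain z where z: "z \<in> carrier M" "r \<otimes> z = \<one>" by auto
  have "a = a \<otimes> (r \<otimes> z)" using z a by simp
  also have "\<dots> = (a \<otimes> r) \<otimes> z" using a r z by (simp add: m_assoc)
  also have "\<dots> = z" using ar z by simp
  finally show ?thesis using z by simp
qed

lemma monogenic_inv:
  fixes M (structure)
  assumes M: "monoid M" and a: "a \<in> carrier M" and S: "S = {a [^]\<^bsub>M\<^esub> n | n::nat. n \<ge> 1}"
    and e: "e \<in> S" and re: "\<forall>x\<in>S. x \<otimes>\<^bsub>M\<^esub> e = x"
  shows "\<forall>x\<in>S. \<exists>y\<in>S. y \<otimes>\<^bsub>M\<^esub> x = e"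
proof -
  interpret monoid M by fact
  obtain k :: nat where k: "k \<ge> 1" "e = a [^] k" using e S by blast
  have per: "a [^] (j + k * m) = a [^] j" if j: "j \<ge> 1" for j m :: nat
  proof (induction m)
    case 0 thus ?case by simp
  next
    case (Suc m)
    have "a [^] (j + k * Suc m) = a [^] (j + k * m) \<otimes> a [^] k"
      using nat_pow_mult[OF a, of "j + k*m" k] by (simp add: algebra_simps)
    also have "\<dots> = a [^] (j + k * m)"
    proof -
      have "a [^] (j + k * m) \<in> S" using S j by auto
      thus ?thesis using re k(2) by simp
    qed
    finally show ?case using Suc by simp
  qed
  show ?thesis
  proof
    fix x assume "x \<in> S"
    then obtain n :: nat where n: "n \<ge> 1" "x = a [^] n" using S by blast
    define m where "m = k * (n + 1) - n"
    have "1 * (n + 1) \<le> k * (n + 1)" using k(1) by (rule mult_le_mono1)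
    hence m1: "m \<ge> 1" and mn: "m + n = k + k * n" unfolding m_def by (simp_all add: algebra_simps)
    have yS: "a [^] m \<in> S" using S m1 by blast
    have "a [^] m \<otimes> x = a [^] (m + n)" using n(2) nat_pow_mult[OF a] by simp
    also have "\<dots> = a [^] k" unfolding mn using per[OF k(1)] by simp
    finally show "\<exists>y\<in>S. y \<otimes> x = e" using yS k(2) by blast
  qed
qed

lemma part1:
  assumes M: "monoid M" and fin: "finite (carrier M)" and grp: "group M"
  shows "sigma_m M = sigma_m_star M \<and> sigma_m_star M = sigma_s M \<and> sigma_s M = sigma_g M"
proof -
  have eq1: "subsemigroup M = (\<lambda>H. subgroup H M)"
  proof (rule ext, rule iffI)
    fix T assume "subsemigroup M T"
    thus "subgroup T M" unfolding subsemigroup_def using finite_group_closed_subgroup[OF grp fin] by blast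
  next
    fix T assume T: "subgroup T M"
    have "\<one>\<^bsub>M\<^esub> \<in> T" using subgroup.one_closed[OF T] .
    thus "subsemigroup M T" unfolding subsemigroup_def
      using subgroup.subset[OF T] subgroup.m_closed[OF T] by blast
  qed
  have eq2: "submonoid' M = (\<lambda>H. subgroup H M)"
  proof (rule ext)
    fix T show "submonoid' M T = subgroup T M"
      unfolding submonoid'_def eq1 using subgroup.one_closed by blast
  qed
  have eq3: "monoidal_subsemigroup M = (\<lambda>H. subgroup H M)"
  proof (rule ext, rule iffI)
    fix T assume "monoidal_subsemigroup M T"
    thus "subgroup T M" unfolding monoidal_subsemigroup_def eq1 by blast
  next
    fix T assume T: "subgroup T M"
    have "\<one>\<^bsub>M\<^esub> \<in> T" using subgroup.one_closed[OF T] .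
    moreover have "\<forall>x\<in>T. \<one>\<^bsub>M\<^esub> \<otimes>\<^bsub>M\<^esub> x = x \<and> x \<otimes>\<^bsub>M\<^esub> \<one>\<^bsub>M\<^esub> = x"
      using subgroup.subset[OF T] monoid.l_one[OF M] monoid.r_one[OF M] by blast
    ultimately show "monoidal_subsemigroup M T" unfolding monoidal_subsemigroup_def eq1
      using T by blast
  qed
  show ?thesis unfolding sigma_m_def sigma_m_star_def sigma_s_def sigma_g_def eq1 eq2 eq3 by simp
qed

lemma carrier_split:
  assumes "monoid M" "S = carrier M - {\<one>\<^bsub>M\<^esub>}"
  shows "carrier M = insert \<one>\<^bsub>M\<^esub> S" "\<one>\<^bsub>M\<^esub> \<notin> S" "S \<subseteq> carrier M"
  using assms monoid.one_closed[OF assms(1)] by auto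

lemma part2:
  assumes M: "monoid M" and fin: "finite (carrier M)" and Sdef: "S = carrier M - {\<one>\<^bsub>M\<^esub>}"
    and ss: "subsemigroup M S" and grp: "group (M\<lparr>carrier := S, one := e\<rparr>)"
  shows "sigma_m_star M = 2 \<and> sigma_s M = 2 \<and> sigma_m M = sigma_g (M\<lparr>carrier := S, one := e\<rparr>)"
proof -
  let ?G = "M\<lparr>carrier := S, one := e\<rparr>"
  note cs = carrier_split[OF M Sdef]
  have Sne: "S \<noteq> {}" and Scl: "\<forall>x\<in>S. \<forall>y\<in>S. x \<otimes>\<^bsub>M\<^esub> y \<in> S" using ss unfolding subsemigroup_def by auto
  have finS: "finite S" using fin cs(3) finite_subset by blast
  have eS: "e \<in> S" using monoid.one_closed[OF group.is_monoid[OF grp]] by simp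
  have eid: "\<forall>x\<in>S. e \<otimes>\<^bsub>M\<^esub> x = x \<and> x \<otimes>\<^bsub>M\<^esub> e = x"
    using monoid.l_one[OF group.is_monoid[OF grp]] monoid.r_one[OF group.is_monoid[OF grp]] by simp
  have one1: "\<one>\<^bsub>M\<^esub> \<otimes>\<^bsub>M\<^esub> \<one>\<^bsub>M\<^esub> = \<one>\<^bsub>M\<^esub>" using M by (simp add: monoid.l_one monoid.one_closed)
  have m1: "monoidal_subsemigroup M {\<one>\<^bsub>M\<^esub>}" unfolding monoidal_subsemigroup_def subsemigroup_def
    using one1 cs by auto
  have m2: "monoidal_subsemigroup M S" unfolding monoidal_subsemigroup_def using ss eS eid by blast
  have p1: "{\<one>\<^bsub>M\<^esub>} \<noteq> carrier M" using cs Sne by auto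
  have p2: "S \<noteq> carrier M" using cs by auto
  have un: "{\<one>\<^bsub>M\<^esub>} \<union> S = carrier M" using cs by auto
  have cne: "carrier M \<noteq> {}" using cs by auto
  have A: "sigma_m_star M = 2" unfolding sigma_m_star_def
    by (rule cover_num_two[OF cne m1 m2 p1 p2 un])
  have B: "sigma_s M = 2"
  proof -
    have s1: "subsemigroup M {\<one>\<^bsub>M\<^esub>}" using m1 unfolding monoidal_subsemigroup_def by blast
    show ?thesis unfolding sigma_s_def by (rule cover_num_two[OF cne s1 ss p1 p2 un])
  qed
  have le1: "sigma_g ?G \<le> sigma_m M" unfolding sigma_m_def sigma_g_def
  proof (rule cover_num_le)
    fix F assume F: "finite F" "\<forall>A\<in>F. submonoid' M A \<and> A \<noteq> carrier M" "\<Union>F = carrier M"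
    define H where "H = (\<lambda>T. T \<inter> S) ` F - {{}}"
    have finH: "finite H" unfolding H_def using F(1) by simp
    have "card H \<le> card ((\<lambda>T. T \<inter> S) ` F)" unfolding H_def using F(1) by (intro card_mono) auto
    also have "\<dots> \<le> card F" by (rule card_image_le[OF F(1)])
    finally have cH: "card H \<le> card F" .
    have Hsub: "\<forall>A\<in>H. subgroup A ?G \<and> A \<noteq> carrier ?G"
    proof
      fix A assume "A \<in> H"
      then obtain T where T: "T \<in> F" "A = T \<inter> S" "A \<noteq> {}" unfolding H_def by blast
      have Tsm: "T \<subseteq> carrier M" "\<one>\<^bsub>M\<^esub> \<in> T" "\<forall>x\<in>T. \<forall>y\<in>T. x \<otimes>\<^bsub>M\<^esub> y \<in> T" "T \<noteq> carrier M"
        using F(2) T(1) unfolding submonoid'_def subsemigroup_def by auto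
      have Acl: "\<forall>x\<in>A. \<forall>y\<in>A. x \<otimes>\<^bsub>M\<^esub> y \<in> A"
      proof (intro ballI)
        fix x y assume "x \<in> A" "y \<in> A"
        hence "x \<in> T" "y \<in> T" "x \<in> S" "y \<in> S" using T(2) by auto
        hence "x \<otimes>\<^bsub>M\<^esub> y \<in> T" "x \<otimes>\<^bsub>M\<^esub> y \<in> S" using Tsm(3) Scl by blast+
        thus "x \<otimes>\<^bsub>M\<^esub> y \<in> A" using T(2) by blast
      qed
      have "subgroup A ?G"
      proof (rule finite_group_closed_subgroup[OF grp])
        show "finite (carrier ?G)" using finS by simp
        show "A \<subseteq> carrier ?G" using T(2) by simp
        show "A \<noteq> {}" by (fact T(3))
        show "\<forall>x\<in>A. \<forall>y\<in>A. x \<otimes>\<^bsub>?G\<^esub> y \<in> A" using Acl by simp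
      qed
      moreover have "A \<noteq> S"
      proof
        assume "A = S"
        hence "S \<subseteq> T" using T(2) by blast
        hence "carrier M \<subseteq> T" unfolding cs(1) using Tsm(2) by blast
        thus False using Tsm(1,4) by blast
      qed
      ultimately show "subgroup A ?G \<and> A \<noteq> carrier ?G" by simp
    qed
    have "\<Union>H = S"
    proof
      show "\<Union>H \<subseteq> S" unfolding H_def by auto
      show "S \<subseteq> \<Union>H"
      proof
        fix s assume s: "s \<in> S"
        then obtain T where "T \<in> F" "s \<in> T" using F(3) cs(3) by blast
        thus "s \<in> \<Union>H" unfolding H_def using s by blast
      qed
    qed
    hence "\<Union>H = carrier ?G" by simp
    thus "\<exists>F'. finite F' \<and> card F' \<le> card F \<and> (\<forall>A\<in>F'. subgroup A ?G \<and> A \<noteq> carrier ?G) \<and> \<Union>F' = carrier ?G"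
      using finH cH Hsub by blast
  qed
  have le2: "sigma_m M \<le> sigma_g ?G" unfolding sigma_m_def sigma_g_def
  proof (rule cover_num_le)
    fix H assume H0: "finite H" "\<forall>A\<in>H. subgroup A ?G \<and> A \<noteq> carrier ?G" "\<Union>H = carrier ?G"
    have cG: "carrier ?G = S" by simp
    have H: "finite H" "\<forall>A\<in>H. subgroup A ?G \<and> A \<noteq> S" "\<Union>H = S"
      using H0 unfolding cG by auto
    define F where "F = insert \<one>\<^bsub>M\<^esub> ` H"
    have Hs: "\<forall>A\<in>H. A \<subseteq> S" using H(3) by blast
    have inj: "inj_on (insert \<one>\<^bsub>M\<^esub>) H"
    proof (rule inj_onI)
      fix A B assume "A \<in> H" "B \<in> H" "insert \<one>\<^bsub>M\<^esub> A = insert \<one>\<^bsub>M\<^esub> B"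
      moreover have "\<one>\<^bsub>M\<^esub> \<notin> A" "\<one>\<^bsub>M\<^esub> \<notin> B" using Hs \<open>A \<in> H\<close> \<open>B \<in> H\<close> cs(2) by auto
      ultimately show "A = B" by (metis insert_ident)
    qed
    have cF: "card F = card H" unfolding F_def using card_image[OF inj] .
    have finF: "finite F" unfolding F_def using H(1) by simp
    have Fp: "\<forall>A\<in>F. submonoid' M A \<and> A \<noteq> carrier M"
    proof
      fix A assume "A \<in> F"
      then obtain K where K: "K \<in> H" "A = insert \<one>\<^bsub>M\<^esub> K" unfolding F_def by blast
      have Kg: "subgroup K ?G" "K \<noteq> S" using H(2) K(1) by auto
      have KS: "K \<subseteq> S" using Hs K(1) by blast
      have Kcl: "\<forall>x\<in>K. \<forall>y\<in>K. x \<otimes>\<^bsub>M\<^esub> y \<in> K" using subgroup.m_closed[OF Kg(1)] by simp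
      have Acl: "\<forall>x\<in>A. \<forall>y\<in>A. x \<otimes>\<^bsub>M\<^esub> y \<in> A"
      proof (intro ballI)
        fix x y assume xy: "x \<in> A" "y \<in> A"
        have xc: "x \<in> carrier M" "y \<in> carrier M" using xy K(2) KS cs(3) monoid.one_closed[OF M] by auto
        show "x \<otimes>\<^bsub>M\<^esub> y \<in> A"
        proof (cases "x = \<one>\<^bsub>M\<^esub>")
          case True thus ?thesis using xy(2) xc(2) M by (simp add: monoid.l_one)
        next
          case False
          hence xK: "x \<in> K" using xy(1) K(2) by blast
          show ?thesis
          proof (cases "y = \<one>\<^bsub>M\<^esub>")
            case True thus ?thesis using xy(1) xc(1) M by (simp add: monoid.r_one)
          next
            case False
            hence "y \<in> K" using xy(2) K(2) by blast
            thus ?thesis using xK Kcl K(2) by blast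
          qed
        qed
      qed
      have "submonoid' M A" unfolding submonoid'_def subsemigroup_def
        using Acl K(2) KS cs by auto
      moreover obtain s where "s \<in> S" "s \<notin> K" using KS Kg(2) by blast
      hence "s \<notin> A" "s \<in> carrier M" using K(2) cs by auto
      ultimately show "submonoid' M A \<and> A \<noteq> carrier M" by blast
    qed
    have "H \<noteq> {}" using H(3) Sne by auto
    hence "\<Union>F = carrier M" unfolding F_def using H(3) cs(1) by auto
    thus "\<exists>F'. finite F' \<and> card F' \<le> card H \<and> (\<forall>A\<in>F'. submonoid' M A \<and> A \<noteq> carrier M) \<and> \<Union>F' = carrier M"
      using finF Fp cF by (intro exI[of _ F]) simp
  qed
  have "sigma_m M = sigma_g ?G" using le1 le2 by (rule antisym[rotated])
  thus ?thesis using A B by blast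
qed


lemma insert_one_submonoid:
  assumes M: "monoid M" and A: "A \<subseteq> carrier M" and Acl: "\<forall>x\<in>A. \<forall>y\<in>A. x \<otimes>\<^bsub>M\<^esub> y \<in> A"
  shows "submonoid' M (insert \<one>\<^bsub>M\<^esub> A)"
proof -
  have cl: "\<forall>x\<in>insert \<one>\<^bsub>M\<^esub> A. \<forall>y\<in>insert \<one>\<^bsub>M\<^esub> A. x \<otimes>\<^bsub>M\<^esub> y \<in> insert \<one>\<^bsub>M\<^esub> A"
  proof (intro ballI)
    fix x y assume xy: "x \<in> insert \<one>\<^bsub>M\<^esub> A" "y \<in> insert \<one>\<^bsub>M\<^esub> A"
    have xc: "x \<in> carrier M" "y \<in> carrier M" using xy A monoid.one_closed[OF M] by auto
    show "x \<otimes>\<^bsub>M\<^esub> y \<in> insert \<one>\<^bsub>M\<^esub> A"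
    proof (cases "x = \<one>\<^bsub>M\<^esub>")
      case True thus ?thesis using xy(2) xc(2) M by (simp add: monoid.l_one)
    next
      case False
      hence xK: "x \<in> A" using xy(1) by blast
      show ?thesis
      proof (cases "y = \<one>\<^bsub>M\<^esub>")
        case True thus ?thesis using xy(1) xc(1) M by (simp add: monoid.r_one)
      next
        case False
        hence "y \<in> A" using xy(2) by blast
        thus ?thesis using xK Acl by blast
      qed
    qed
  qed
  show ?thesis unfolding submonoid'_def subsemigroup_def
    using cl A monoid.one_closed[OF M] by auto
qed

lemma submonoid_monoidal: "monoid M \<Longrightarrow> submonoid' M T \<Longrightarrow> monoidal_subsemigroup M T"
  unfolding submonoid'_def monoidal_subsemigroup_def subsemigroup_def
  by (meson monoid.l_one monoid.r_one subsetD)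

lemma monoidal_subsemi: "monoidal_subsemigroup M T \<Longrightarrow> subsemigroup M T"
  unfolding monoidal_subsemigroup_def by blast

lemma part3:
  assumes M: "monoid M" and fin: "finite (carrier M)" and Sdef: "S = carrier M - {\<one>\<^bsub>M\<^esub>}"
    and ss: "subsemigroup M S" and mono: "monogenic M S"
    and ng: "\<not> (\<exists>e. group (M\<lparr>carrier := S, one := e\<rparr>))"
  shows "sigma_s M = 2 \<and> sigma_m_star M = \<infinity> \<and> sigma_m M = \<infinity>"
proof -
  note cs = carrier_split[OF M Sdef]
  have Sne: "S \<noteq> {}" and Scl: "\<forall>x\<in>S. \<forall>y\<in>S. x \<otimes>\<^bsub>M\<^esub> y \<in> S" using ss unfolding subsemigroup_def by auto
  obtain a where a: "a \<in> S" "S = {a [^]\<^bsub>M\<^esub> n | n::nat. n \<ge> 1}" using mono unfolding monogenic_def by blast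
  have ac: "a \<in> carrier M" using a(1) cs(3) by blast
  have one1: "\<one>\<^bsub>M\<^esub> \<otimes>\<^bsub>M\<^esub> \<one>\<^bsub>M\<^esub> = \<one>\<^bsub>M\<^esub>" using M by (simp add: monoid.l_one monoid.one_closed)
  have s1: "subsemigroup M {\<one>\<^bsub>M\<^esub>}" unfolding subsemigroup_def using one1 cs by auto
  have p1: "{\<one>\<^bsub>M\<^esub>} \<noteq> carrier M" using cs Sne by auto
  have p2: "S \<noteq> carrier M" using cs by auto
  have un: "{\<one>\<^bsub>M\<^esub>} \<union> S = carrier M" using cs by auto
  have cne: "carrier M \<noteq> {}" using cs by auto
  have A: "sigma_s M = 2" unfolding sigma_s_def by (rule cover_num_two[OF cne s1 ss p1 p2 un])
  have big: "S \<subseteq> T" if "T \<subseteq> carrier M" "\<forall>x\<in>T. \<forall>y\<in>T. x \<otimes>\<^bsub>M\<^esub> y \<in> T" "a \<in> T" for T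
    using powers_in[OF M that] a(2) by blast
  have B: "sigma_m_star M = \<infinity>" unfolding sigma_m_star_def
  proof (rule cover_num_inf[OF ac])
    fix T assume T: "monoidal_subsemigroup M T" "T \<noteq> carrier M"
    show "a \<notin> T"
    proof
      assume aT: "a \<in> T"
      from T(1) obtain e where Tss: "T \<subseteq> carrier M" "\<forall>x\<in>T. \<forall>y\<in>T. x \<otimes>\<^bsub>M\<^esub> y \<in> T"
        and e: "e \<in> T" "\<forall>x\<in>T. e \<otimes>\<^bsub>M\<^esub> x = x \<and> x \<otimes>\<^bsub>M\<^esub> e = x"
        unfolding monoidal_subsemigroup_def subsemigroup_def by blast
      have ST: "S \<subseteq> T" using big[OF Tss aT] .
      have "\<one>\<^bsub>M\<^esub> \<notin> T"
      proof
        assume "\<one>\<^bsub>M\<^esub> \<in> T"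
        hence "carrier M \<subseteq> T" unfolding cs(1) using ST by blast
        thus False using Tss(1) T(2) by blast
      qed
      hence "T \<subseteq> S" using Tss(1) unfolding Sdef by blast
      hence TS: "T = S" using ST by blast
      have eS: "e \<in> S" using e(1) TS by simp
      have le: "\<forall>x\<in>S. e \<otimes>\<^bsub>M\<^esub> x = x" and re: "\<forall>x\<in>S. x \<otimes>\<^bsub>M\<^esub> e = x" using e(2) TS by auto
      have inv: "\<forall>x\<in>S. \<exists>y\<in>S. y \<otimes>\<^bsub>M\<^esub> x = e" by (rule monogenic_inv[OF M ac a(2) eS re])
      have "group (M\<lparr>carrier := S, one := e\<rparr>)" by (rule make_group[OF M cs(3) Scl eS le inv])
      thus False using ng by blast
    qed
  qed
  have C: "sigma_m M = \<infinity>" unfolding sigma_m_def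
  proof (rule cover_num_inf[OF ac])
    fix T assume T: "submonoid' M T" "T \<noteq> carrier M"
    show "a \<notin> T"
    proof
      assume aT: "a \<in> T"
      from T(1) have Tss: "T \<subseteq> carrier M" "\<forall>x\<in>T. \<forall>y\<in>T. x \<otimes>\<^bsub>M\<^esub> y \<in> T" "\<one>\<^bsub>M\<^esub> \<in> T"
        unfolding submonoid'_def subsemigroup_def by auto
      have ST: "S \<subseteq> T" using big[OF Tss(1,2) aT] .
      hence "carrier M \<subseteq> T" unfolding cs(1) using Tss(3) by blast
      thus False using Tss(1) T(2) by blast
    qed
  qed
  show ?thesis using A B C by blast
qed


lemma part4_key:
  fixes M (structure)
  assumes M: "monoid M" and fin: "finite (carrier M)" and Sdef: "S = carrier M - {\<one>\<^bsub>M\<^esub>}"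
    and ng1: "\<not> group M"
    and ng2: "\<not> (subsemigroup M S \<and> (\<exists>e. group (M\<lparr>carrier := S, one := e\<rparr>)))"
    and ng3: "\<not> (subsemigroup M S \<and> monogenic M S \<and> \<not> (\<exists>e. group (M\<lparr>carrier := S, one := e\<rparr>)))"
  shows "\<exists>A B. submonoid' M A \<and> submonoid' M B \<and> A \<noteq> carrier M \<and> B \<noteq> carrier M \<and> A \<union> B = carrier M"
proof -
  note cs = carrier_split[OF M Sdef]
  have finS: "finite S" using fin cs(3) finite_subset by blast
  show ?thesis
  proof (cases "subsemigroup M S")
    case True
    hence nge: "\<not> (\<exists>e. group (M\<lparr>carrier := S, one := e\<rparr>))" and nmono: "\<not> monogenic M S"
      using ng2 ng3 by auto
    have Sne: "S \<noteq> {}" and Scl: "\<forall>x\<in>S. \<forall>y\<in>S. x \<otimes>\<^bsub>M\<^esub> y \<in> S"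
      using True unfolding subsemigroup_def by auto
    have nm: "\<forall>a\<in>S. \<exists>T. T \<subseteq> S \<and> a \<in> T \<and> T \<noteq> S \<and> (\<forall>x\<in>T. \<forall>y\<in>T. x \<otimes>\<^bsub>M\<^esub> y \<in> T)"
    proof
      fix a assume a: "a \<in> S"
      let ?T = "{a [^]\<^bsub>M\<^esub> n | n::nat. n \<ge> 1}"
      have ac: "a \<in> carrier M" using a cs(3) by blast
      have "?T \<subseteq> S" using powers_in[OF M cs(3) Scl a] by blast
      moreover have "a \<in> ?T"
      proof -
        have "a = a [^]\<^bsub>M\<^esub> (1::nat)" using pow_one1[OF M ac] by simp
        thus ?thesis by blast
      qed
      moreover have "?T \<noteq> S" using nmono a unfolding monogenic_def by blast
      moreover have "\<forall>x\<in>?T. \<forall>y\<in>?T. x \<otimes>\<^bsub>M\<^esub> y \<in> ?T"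
      proof (intro ballI)
        fix x y assume "x \<in> ?T" "y \<in> ?T"
        then obtain m n :: nat where mn: "m \<ge> 1" "x = a [^]\<^bsub>M\<^esub> m" "n \<ge> 1" "y = a [^]\<^bsub>M\<^esub> n" by blast
        have "x \<otimes>\<^bsub>M\<^esub> y = a [^]\<^bsub>M\<^esub> (m + n)" using mn monoid.nat_pow_mult[OF M ac] by simp
        moreover have "m + n \<ge> 1" using mn by simp
        ultimately show "x \<otimes>\<^bsub>M\<^esub> y \<in> ?T" by blast
      qed
      ultimately show "\<exists>T. T \<subseteq> S \<and> a \<in> T \<and> T \<noteq> S \<and> (\<forall>x\<in>T. \<forall>y\<in>T. x \<otimes>\<^bsub>M\<^esub> y \<in> T)"
        by blast
    qed
    have ngr: "\<not> (\<exists>e\<in>S. (\<forall>x\<in>S. e \<otimes>\<^bsub>M\<^esub> x = x \<and> x \<otimes>\<^bsub>M\<^esub> e = x) \<and> (\<forall>x\<in>S. \<exists>y\<in>S. y \<otimes>\<^bsub>M\<^esub> x = e))"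
    proof
      assume "\<exists>e\<in>S. (\<forall>x\<in>S. e \<otimes>\<^bsub>M\<^esub> x = x \<and> x \<otimes>\<^bsub>M\<^esub> e = x) \<and> (\<forall>x\<in>S. \<exists>y\<in>S. y \<otimes>\<^bsub>M\<^esub> x = e)"
      then obtain e where e: "e \<in> S" "\<forall>x\<in>S. e \<otimes>\<^bsub>M\<^esub> x = x" "\<forall>x\<in>S. \<exists>y\<in>S. y \<otimes>\<^bsub>M\<^esub> x = e"
        by blast
      have "group (M\<lparr>carrier := S, one := e\<rparr>)" by (rule make_group[OF M cs(3) Scl e])
      thus False using nge by blast
    qed
    have as: "\<forall>x\<in>S. \<forall>y\<in>S. \<forall>z\<in>S. (x \<otimes>\<^bsub>M\<^esub> y) \<otimes>\<^bsub>M\<^esub> z = x \<otimes>\<^bsub>M\<^esub> (y \<otimes>\<^bsub>M\<^esub> z)"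
      using monoid.m_assoc[OF M] cs(3) by blast
    from semigroup_cover[OF finS Sne Scl as nm ngr] obtain A B where
      AB: "A \<subseteq> S" "B \<subseteq> S" "A \<noteq> S" "B \<noteq> S" "A \<union> B = S"
        "\<forall>x\<in>A. \<forall>y\<in>A. x \<otimes>\<^bsub>M\<^esub> y \<in> A" "\<forall>x\<in>B. \<forall>y\<in>B. x \<otimes>\<^bsub>M\<^esub> y \<in> B"
      by blast
    have sA: "submonoid' M (insert \<one>\<^bsub>M\<^esub> A)" using insert_one_submonoid[OF M _ AB(6)] AB(1) cs(3) by blast
    have sB: "submonoid' M (insert \<one>\<^bsub>M\<^esub> B)" using insert_one_submonoid[OF M _ AB(7)] AB(2) cs(3) by blast
    obtain s where s: "s \<in> S" "s \<notin> A" using AB(1,3) by blast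
    obtain t where t: "t \<in> S" "t \<notin> B" using AB(2,4) by blast
    have "s \<noteq> \<one>\<^bsub>M\<^esub>" "t \<noteq> \<one>\<^bsub>M\<^esub>" using s t cs(2) by blast+
    hence "s \<notin> insert \<one>\<^bsub>M\<^esub> A" "t \<notin> insert \<one>\<^bsub>M\<^esub> B" using s t by simp_all
    moreover have "s \<in> carrier M" "t \<in> carrier M" using s t cs(3) by blast+
    ultimately have pA: "insert \<one>\<^bsub>M\<^esub> A \<noteq> carrier M" and pB: "insert \<one>\<^bsub>M\<^esub> B \<noteq> carrier M"
      by blast+
    have "insert \<one>\<^bsub>M\<^esub> A \<union> insert \<one>\<^bsub>M\<^esub> B = carrier M" using AB(5) cs(1) by auto
    thus ?thesis using sA sB pA pB by blast
  next
    case False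
    interpret monoid M by fact
    have notall: "\<not> carrier M \<subseteq> Units M"
    proof
      assume "carrier M \<subseteq> Units M"
      hence "group M" by (intro group.intro M group_axioms.intro)
      thus False using ng1 by blast
    qed
    have Sne: "S \<noteq> {}"
    proof
      assume "S = {}"
      hence "carrier M = {\<one>}" using cs(1) by simp
      thus False using notall by simp
    qed
    obtain x y where xy: "x \<in> S" "y \<in> S" "x \<otimes> y \<notin> S"
      using False Sne cs(3) unfolding subsemigroup_def by blast
    have xc: "x \<in> carrier M" "y \<in> carrier M" using xy cs(3) by auto
    have xy1: "x \<otimes> y = \<one>" using xy(3) xc unfolding Sdef by auto
    have yx1: "y \<otimes> x = \<one>" by (rule finite_monoid_inv[OF M fin xc xy1])
    have xU: "x \<in> Units M" unfolding Units_def using xc xy1 yx1 by blast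
    have x1: "x \<noteq> \<one>" using xy(1) cs(2) by blast
    have Usub: "Units M \<subseteq> carrier M" unfolding Units_def by blast
    have sU: "submonoid' M (Units M)" unfolding submonoid'_def subsemigroup_def
      using Usub Units_one_closed Units_m_closed by blast
    let ?N = "carrier M - Units M"
    have Ncl: "\<forall>a\<in>?N. \<forall>b\<in>?N. a \<otimes> b \<in> ?N"
    proof (intro ballI)
      fix a b assume a: "a \<in> ?N" and b: "b \<in> ?N"
      show "a \<otimes> b \<in> ?N"
      proof (rule ccontr)
        assume "a \<otimes> b \<notin> ?N"
        hence "a \<otimes> b \<in> Units M" using a b by auto
        then obtain c where c: "c \<in> carrier M" "(a \<otimes> b) \<otimes> c = \<one>" unfolding Units_def by blast
        have ac: "a \<in> carrier M" "b \<in> carrier M" using a b by auto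
        have e1: "a \<otimes> (b \<otimes> c) = \<one>" using c ac by (simp add: m_assoc)
        have e2: "(b \<otimes> c) \<otimes> a = \<one>" by (rule finite_monoid_inv[OF M fin ac(1) _ e1]) (use c ac in simp)
        have "a \<in> Units M" unfolding Units_def using ac c e1 e2 by blast
        thus False using a by blast
      qed
    qed
    have sN: "submonoid' M (insert \<one> ?N)" using insert_one_submonoid[OF M _ Ncl] by blast
    have pU: "Units M \<noteq> carrier M" using notall by blast
    have pN: "insert \<one> ?N \<noteq> carrier M" using xU x1 xc by blast
    have "Units M \<union> insert \<one> ?N = carrier M" using Usub by auto
    thus ?thesis using sU sN pU pN by blast
  qed
qed

lemma part4:
  assumes M: "monoid M" and fin: "finite (carrier M)" and Sdef: "S = carrier M - {\<one>\<^bsub>M\<^esub>}"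
    and ng1: "\<not> group M"
    and ng2: "\<not> (subsemigroup M S \<and> (\<exists>e. group (M\<lparr>carrier := S, one := e\<rparr>)))"
    and ng3: "\<not> (subsemigroup M S \<and> monogenic M S \<and> \<not> (\<exists>e. group (M\<lparr>carrier := S, one := e\<rparr>)))"
  shows "sigma_m M = 2 \<and> sigma_m_star M = 2 \<and> sigma_s M = 2"
proof -
  obtain A B where AB: "submonoid' M A" "submonoid' M B" "A \<noteq> carrier M" "B \<noteq> carrier M" "A \<union> B = carrier M"
    using part4_key[OF assms] by blast
  have cne: "carrier M \<noteq> {}" using monoid.one_closed[OF M] by blast
  have mA: "monoidal_subsemigroup M A" "monoidal_subsemigroup M B" using AB submonoid_monoidal[OF M] by auto
  have sA: "subsemigroup M A" "subsemigroup M B" using mA monoidal_subsemi by auto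
  have 1: "sigma_m M = 2" unfolding sigma_m_def by (rule cover_num_two[OF cne AB])
  have 2: "sigma_m_star M = 2" unfolding sigma_m_star_def by (rule cover_num_two[OF cne mA AB(3-5)])
  have 3: "sigma_s M = 2" unfolding sigma_s_def by (rule cover_num_two[OF cne sA AB(3-5)])
  show ?thesis using 1 2 3 by blast
qed


theorem mainTheorem19:
  fixes M :: "('a, 'b) monoid_scheme"
  assumes "monoid M" and "finite (carrier M)"
  defines "S \<equiv> carrier M - {\<one>\<^bsub>M\<^esub>}"
  shows
    "(group M \<longrightarrow>
        sigma_m M = sigma_m_star M \<and> sigma_m_star M = sigma_s M \<and> sigma_s M = sigma_g M)
   \<and> (\<forall>e. subsemigroup M S \<and> group (M\<lparr>carrier := S, one := e\<rparr>) \<longrightarrow>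
        sigma_m_star M = 2 \<and> sigma_s M = 2 \<and>
        sigma_m M = sigma_g (M\<lparr>carrier := S, one := e\<rparr>))
   \<and> (subsemigroup M S \<and> monogenic M S \<and> \<not> (\<exists>e. group (M\<lparr>carrier := S, one := e\<rparr>)) \<longrightarrow>
        sigma_s M = 2 \<and> sigma_m_star M = \<infinity> \<and> sigma_m M = \<infinity>)
   \<and> (\<not> group M
      \<and> \<not> (subsemigroup M S \<and> (\<exists>e. group (M\<lparr>carrier := S, one := e\<rparr>)))
      \<and> \<not> (subsemigroup M S \<and> monogenic M S \<and> \<not> (\<exists>e. group (M\<lparr>carrier := S, one := e\<rparr>))) \<longrightarrow>
        sigma_m M = 2 \<and> sigma_m_star M = 2 \<and> sigma_s M = 2)"
  proof -
  have Sd: "S = carrier M - {\<one>\<^bsub>M\<^esub>}" by (simp add: S_def)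
  have P1: "group M \<longrightarrow>
        sigma_m M = sigma_m_star M \<and> sigma_m_star M = sigma_s M \<and> sigma_s M = sigma_g M"
    using part1[OF assms(1,2)] by blast
  have P2: "\<forall>e. subsemigroup M S \<and> group (M\<lparr>carrier := S, one := e\<rparr>) \<longrightarrow>
        sigma_m_star M = 2 \<and> sigma_s M = 2 \<and>
        sigma_m M = sigma_g (M\<lparr>carrier := S, one := e\<rparr>)"
    using part2[OF assms(1,2) Sd] by blast
  have P3: "subsemigroup M S \<and> monogenic M S \<and> \<not> (\<exists>e. group (M\<lparr>carrier := S, one := e\<rparr>)) \<longrightarrow>
        sigma_s M = 2 \<and> sigma_m_star M = \<infinity> \<and> sigma_m M = \<infinity>"
    using part3[OF assms(1,2) Sd] by blast
  have P4: "\<not> group M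
      \<and> \<not> (subsemigroup M S \<and> (\<exists>e. group (M\<lparr>carrier := S, one := e\<rparr>)))
      \<and> \<not> (subsemigroup M S \<and> monogenic M S \<and> \<not> (\<exists>e. group (M\<lparr>carrier := S, one := e\<rparr>))) \<longrightarrow>
        sigma_m M = 2 \<and> sigma_m_star M = 2 \<and> sigma_s M = 2"
    using part4[OF assms(1,2) Sd] by blast
  show ?thesis using P1 P2 P3 P4 by blast
qed

end
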